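(* Let $n\ge 1$ and let $S\in Sp(4n,\mathbb{R})$ be written in $2n\times 2n$ blocks. Suppose that for all covariance matrices $\varGamma_1,\varGamma_2\in\mathbb{R}^{2n\times 2n}$ the matrix $$S\begin{pmatrix}\varGamma_1&0\\0&\varGamma_2\end{pmatrix}S^{T}$$ is block diagonal, i.e. of the form $\begin{pmatrix}\cdot&0\\0&*\end{pmatrix}$ with $2n\times 2n$ diagonal blocks (which are covariance matrices). Then $S$ is either of the form $\begin{pmatrix}A&0\\0&D\end{pmatrix}$ or of the form $\begin{pmatrix}0&B\\C&0\end{pmatrix}$ with $A,B,C,D\in Sp(2n,\mathbb{R})$.
   Context: $\sigma=\bigoplus_{i=1}^{n}\omega$ with $\omega=\begin{pmatrix}0&1\\-1&0\end{pmatrix}$ is the $2n\times 2n$ symplectic form (and $\sigma\oplus\sigma$ the $4n\times4n$ one). $Sp(2m,\mathbb{R})$ is the group of real $2m\times 2m$ matrices $S$ with $S\sigma S^T=\sigma$. A covariance matrix (CM) is a real symmetric $2n\times 2n$ matrix $\varGamma$ satisfying $\varGamma+i\sigma\ge 0$. *)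

theory Defs
  imports "Jordan_Normal_Form.Matrix"
begin

(* The 2m x 2m symplectic form sigma = direct sum of m copies of omega = [[0,1],[-1,0]].
   Note: symp_form (2*n) is exactly sigma (+) sigma for the 2n x 2n form sigma. *)
definition symp_form :: "nat \<Rightarrow> real mat" where
  "symp_form m = mat (2*m) (2*m) (\<lambda>(i,j).
      if even i \<and> j = i + 1 then 1
      else if odd i \<and> i = j + 1 then -1 else 0)"

definition symplectic :: "nat \<Rightarrow> real mat \<Rightarrow> bool" where
  "symplectic m S \<longleftrightarrow> S \<in> carrier_mat (2*m) (2*m) \<and>
      S * symp_form m * transpose_mat S = symp_form m"

definition cpsd :: "nat \<Rightarrow> complex mat \<Rightarrow> bool" where
  "cpsd k M \<longleftrightarrow> M \<in> carrier_mat k k \<and>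
     (\<forall>v \<in> carrier_vec k. Im (conjugate v \<bullet> (M *\<^sub>v v)) = 0 \<and>
                            Re (conjugate v \<bullet> (M *\<^sub>v v)) \<ge> 0)"

definition covariance_matrix :: "nat \<Rightarrow> real mat \<Rightarrow> bool" where
  "covariance_matrix n G \<longleftrightarrow> G \<in> carrier_mat (2*n) (2*n) \<and> transpose_mat G = G \<and>
     cpsd (2*n) (map_mat complex_of_real G + \<i> \<cdot>\<^sub>m map_mat complex_of_real (symp_form n))"

end

theory Submission
  imports Defs
begin


definition pp :: "nat \<Rightarrow> nat" where "pp i = (if even i then i+1 else i-1)"

lemma sigma_entry:
  assumes "i < 2*n" "j < 2*n"
  shows "symp_form n $$ (i,j) = (if j = pp i then (if even i then 1 else -1) else 0)"
proof (cases "even i")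
  case True then show ?thesis using assms unfolding symp_form_def pp_def by auto
next
  case False
  then have "i \<ge> 1" by (cases i) auto
  then have "(j = i - 1) = (i = j + 1)" by arith
  with False show ?thesis using assms unfolding symp_form_def pp_def by auto
qed

lemma pp_lt: "i < 2*n \<Longrightarrow> pp i < 2*n"
proof -
  assume a: "i < 2*n"
  show ?thesis
  proof (cases "even i")
    case True
    then have "i + 1 < 2*n" using a by (metis Suc_eq_plus1 Suc_lessI dvd_triv_left even_Suc)
    with True show ?thesis unfolding pp_def by simp
  qed (use a in \<open>auto simp: pp_def\<close>)
qed

lemma pp_pp: "pp (pp i) = i"
proof (cases "even i")
  case True then show ?thesis unfolding pp_def by simp
next
  case False
  then have "i \<ge> 1" by (cases i) auto
  with False show ?thesis unfolding pp_def by auto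
qed

lemma sigma_sum:
  assumes "i < 2*n"
  shows "(\<Sum>j<2*n. symp_form n $$ (i,j) * z j) = (if even i then 1 else -1) * z (pp i)"
proof -
  have "(\<Sum>j<2*n. symp_form n $$ (i,j) * z j) = (\<Sum>j<2*n. if j = pp i then (if even i then 1 else -1) * z j else 0)"
    by (rule sum.cong) (use assms in \<open>auto simp: sigma_entry\<close>)
  also have "\<dots> = (if even i then 1 else -1) * z (pp i)"
    using pp_lt[OF assms] by (simp add: sum.delta)
  finally show ?thesis .
qed

lemma pp_sum: "(\<Sum>i<2*n. f (pp i)) = (\<Sum>i<2*n. (f i :: real))"
proof -
  have b: "bij_betw pp {..<2*n} {..<2*n}"
    by (rule bij_betw_byWitness[where f'=pp]) (auto simp: pp_pp pp_lt)
  show ?thesis using sum.reindex_bij_betw[OF b, of f] by simp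
qed

lemma sum_antisym:
  assumes "\<And>i j. i \<in> A \<Longrightarrow> j \<in> A \<Longrightarrow> f i j = - f j i"
  shows "(\<Sum>i\<in>A. \<Sum>j\<in>A. f i j) = (0::real)"
proof -
  have "(\<Sum>i\<in>A. \<Sum>j\<in>A. f i j) = (\<Sum>j\<in>A. \<Sum>i\<in>A. f i j)" by (rule sum.swap)
  also have "\<dots> = (\<Sum>j\<in>A. \<Sum>i\<in>A. - f j i)" by (intro sum.cong refl) (metis assms)
  also have "\<dots> = - (\<Sum>i\<in>A. \<Sum>j\<in>A. f i j)" by (simp add: sum_negf)
  finally show ?thesis by simp
qed

lemma sigma_antisym: "i < 2*n \<Longrightarrow> j < 2*n \<Longrightarrow> symp_form n $$ (j,i) = - symp_form n $$ (i,j)"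
  unfolding symp_form_def by auto

lemma re_term: "Re (cnj a * ((complex_of_real g + \<i> * complex_of_real s) * b)) =
   g * (Re a * Re b + Im a * Im b) - s * (Re a * Im b - Im a * Re b)"
  by (simp add: algebra_simps)

lemma im_term: "Im (cnj a * ((complex_of_real g + \<i> * complex_of_real s) * b)) =
   g * (Re a * Im b - Im a * Re b) + s * (Re a * Re b + Im a * Im b)"
  by (simp add: algebra_simps)

lemma sq_bound: "(s::real)^2 = 1 \<Longrightarrow> 2 * (a * (s * b)) \<le> a^2 + b^2"
proof -
  assume "s^2 = 1"
  have "0 \<le> (a - s*b)^2" by simp
  also have "\<dots> = a^2 + s^2*b^2 - 2*(a*(s*b))" by (simp add: power2_eq_square algebra_simps)
  finally show ?thesis using \<open>s^2 = 1\<close> by simp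
qed

lemma mult_mat_vec_sum: "A \<in> carrier_mat m k \<Longrightarrow> v \<in> carrier_vec k \<Longrightarrow> i < m \<Longrightarrow>
   (A *\<^sub>v v) $ i = (\<Sum>j<k. A $$ (i,j) * v $ j)"
  by (auto simp: scalar_prod_def atLeast0LessThan intro!: sum.cong)

lemma conj_scalar_sum: "v \<in> carrier_vec k \<Longrightarrow> w \<in> carrier_vec k \<Longrightarrow>
   conjugate v \<bullet> w = (\<Sum>i<k. cnj (v$i) * w$i)"
  by (auto simp: scalar_prod_def atLeast0LessThan intro!: sum.cong)

lemma cm_suff:
  assumes G: "G \<in> carrier_mat (2*n) (2*n)" and sym: "\<And>i j. i < 2*n \<Longrightarrow> j < 2*n \<Longrightarrow> G $$ (j,i) = G $$ (i,j)"
    and pos: "\<And>x. (\<Sum>i<2*n. \<Sum>j<2*n. G $$ (i,j) * x i * x j) \<ge> (\<Sum>i<2*n. (x i)^2)"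
  shows "cpsd (2*n) (map_mat complex_of_real G + \<i> \<cdot>\<^sub>m map_mat complex_of_real (symp_form n))"
  unfolding cpsd_def
proof (intro conjI ballI)
  let ?M = "map_mat complex_of_real G + \<i> \<cdot>\<^sub>m map_mat complex_of_real (symp_form n)"
  let ?s = "symp_form n"
  show "?M \<in> carrier_mat (2*n) (2*n)" using G by (auto simp: symp_form_def)
  fix v :: "complex vec" assume v: "v \<in> carrier_vec (2*n)"
  define x where "x i = Re (v $ i)" for i
  define y where "y i = Im (v $ i)" for i
  have e: "conjugate v \<bullet> (?M *\<^sub>v v) = (\<Sum>i<2*n. \<Sum>j<2*n. cnj (v$i) *
      ((complex_of_real (G$$(i,j)) + \<i> * complex_of_real (?s$$(i,j))) * v$j))"
  proof -
    have sc: "?s \<in> carrier_mat (2*n) (2*n)" by (simp add: symp_form_def)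
    have Mc: "?M \<in> carrier_mat (2*n) (2*n)" using G sc by auto
    have Mi: "?M $$ (i,j) = complex_of_real (G$$(i,j)) + \<i> * complex_of_real (?s$$(i,j))"
      if "i < 2*n" "j < 2*n" for i j using G sc that by simp
    have Mv: "(?M *\<^sub>v v) $ i = (\<Sum>j<2*n. ?M $$ (i,j) * v$j)" if "i < 2*n" for i
      by (rule mult_mat_vec_sum[OF Mc v that])
    have "conjugate v \<bullet> (?M *\<^sub>v v) = (\<Sum>i<2*n. cnj (v$i) * (?M *\<^sub>v v)$i)"
      by (rule conj_scalar_sum[OF v mult_mat_vec_carrier[OF Mc v]])
    also have "\<dots> = (\<Sum>i<2*n. cnj (v$i) * (\<Sum>j<2*n. ?M $$ (i,j) * v$j))"
      by (rule sum.cong[OF refl]) (simp only: Mv lessThan_iff)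
    also have "\<dots> = (\<Sum>i<2*n. \<Sum>j<2*n. cnj (v$i) *
      ((complex_of_real (G$$(i,j)) + \<i> * complex_of_real (?s$$(i,j))) * v$j))"
      by (rule sum.cong[OF refl], simp only: sum_distrib_left, rule sum.cong[OF refl], simp only: Mi lessThan_iff)
    finally show ?thesis .
  qed
  have "Im (conjugate v \<bullet> (?M *\<^sub>v v)) = (\<Sum>i<2*n. \<Sum>j<2*n.
      G$$(i,j) * (x i * y j - y i * x j) + ?s$$(i,j) * (x i * x j + y i * y j))"
    unfolding e Im_sum im_term x_def y_def ..
  also have "\<dots> = 0"
  proof (rule sum_antisym)
    fix i j assume "i \<in> {..<2*n}" "j \<in> {..<2*n}"
    then show "G$$(i,j) * (x i * y j - y i * x j) + ?s$$(i,j) * (x i * x j + y i * y j) =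
       - (G$$(j,i) * (x j * y i - y j * x i) + ?s$$(j,i) * (x j * x i + y j * y i))"
      using sym[of i j] sigma_antisym[of i n j] by (simp add: algebra_simps)
  qed
  finally show "Im (conjugate v \<bullet> (?M *\<^sub>v v)) = 0" .
  define sg where "sg i = (if even i then 1 else -1::real)" for i :: nat
  have sg2: "(sg i)^2 = 1" for i by (simp add: sg_def)
  have "Re (conjugate v \<bullet> (?M *\<^sub>v v)) = (\<Sum>i<2*n. \<Sum>j<2*n.
      G$$(i,j) * (x i * x j + y i * y j) - ?s$$(i,j) * (x i * y j - y i * x j))"
    unfolding e Re_sum re_term x_def y_def ..
  also have "\<dots> = (\<Sum>i<2*n. \<Sum>j<2*n. G$$(i,j) * x i * x j) + (\<Sum>i<2*n. \<Sum>j<2*n. G$$(i,j) * y i * y j)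
     - (\<Sum>i<2*n. x i * (\<Sum>j<2*n. ?s$$(i,j) * y j)) + (\<Sum>i<2*n. y i * (\<Sum>j<2*n. ?s$$(i,j) * x j))"
    by (simp add: sum_distrib_left sum_subtractf sum.distrib algebra_simps)
  also have "\<dots> = (\<Sum>i<2*n. \<Sum>j<2*n. G$$(i,j) * x i * x j) + (\<Sum>i<2*n. \<Sum>j<2*n. G$$(i,j) * y i * y j)
     - (\<Sum>i<2*n. x i * (sg i * y (pp i))) + (\<Sum>i<2*n. y i * (sg i * x (pp i)))"
    by (simp add: sigma_sum sg_def)
  finally have r: "Re (conjugate v \<bullet> (?M *\<^sub>v v)) = \<dots>" .
  have b1: "2 * (\<Sum>i<2*n. x i * (sg i * y (pp i))) \<le> (\<Sum>i<2*n. (x i)^2) + (\<Sum>i<2*n. (y i)^2)"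
  proof -
    have "2 * (\<Sum>i<2*n. x i * (sg i * y (pp i))) = (\<Sum>i<2*n. 2 * (x i * (sg i * y (pp i))))"
      by (simp add: sum_distrib_left)
    also have "\<dots> \<le> (\<Sum>i<2*n. (x i)^2 + (y (pp i))^2)"
      by (rule sum_mono) (rule sq_bound[OF sg2])
    also have "\<dots> = (\<Sum>i<2*n. (x i)^2) + (\<Sum>i<2*n. (y i)^2)"
      by (simp add: sum.distrib pp_sum[of "\<lambda>i. (y i)^2"])
    finally show ?thesis .
  qed
  have b2: "- 2 * (\<Sum>i<2*n. y i * (sg i * x (pp i))) \<le> (\<Sum>i<2*n. (y i)^2) + (\<Sum>i<2*n. (x i)^2)"
  proof -
    have "- 2 * (\<Sum>i<2*n. y i * (sg i * x (pp i))) = (\<Sum>i<2*n. 2 * (y i * ((- sg i) * x (pp i))))"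
      by (simp add: sum_distrib_left sum_negf)
    also have "\<dots> \<le> (\<Sum>i<2*n. (y i)^2 + (x (pp i))^2)"
      by (rule sum_mono) (rule sq_bound, simp add: sg2)
    also have "\<dots> = (\<Sum>i<2*n. (y i)^2) + (\<Sum>i<2*n. (x i)^2)"
      by (simp add: sum.distrib pp_sum[of "\<lambda>i. (x i)^2"])
    finally show ?thesis .
  qed
  show "Re (conjugate v \<bullet> (?M *\<^sub>v v)) \<ge> 0"
    unfolding r using pos[of x] pos[of y] b1 b2 by linarith
qed



definition Gv :: "nat \<Rightarrow> (nat \<Rightarrow> real) \<Rightarrow> real mat" where
  "Gv n v = mat (2*n) (2*n) (\<lambda>(k,l). (if k = l then 1 else 0) + v k * v l)"

lemma Gv_cm: "covariance_matrix n (Gv n v)"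
  unfolding covariance_matrix_def
proof (intro conjI)
  show c: "Gv n v \<in> carrier_mat (2*n) (2*n)" by (simp add: Gv_def)
  show "transpose_mat (Gv n v) = Gv n v" by (rule eq_matI) (auto simp: Gv_def)
  show "cpsd (2*n) (map_mat complex_of_real (Gv n v) + \<i> \<cdot>\<^sub>m map_mat complex_of_real (symp_form n))"
  proof (rule cm_suff[OF c])
    fix i j assume "i < 2*n" "j < 2*n"
    then show "Gv n v $$ (j,i) = Gv n v $$ (i,j)" by (simp add: Gv_def)
  next
    fix x :: "nat \<Rightarrow> real"
    have "(\<Sum>i<2*n. \<Sum>j<2*n. Gv n v $$ (i,j) * x i * x j)
        = (\<Sum>i<2*n. \<Sum>j<2*n. (if i = j then x i * x j else 0) + (v i * x i) * (v j * x j))"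
      by (intro sum.cong refl) (simp add: Gv_def algebra_simps)
    also have "\<dots> = (\<Sum>i<2*n. (x i)^2) + (\<Sum>i<2*n. v i * x i)^2"
      by (simp add: sum.distrib power2_eq_square sum_product)
    finally show "(\<Sum>i<2*n. \<Sum>j<2*n. Gv n v $$ (i,j) * x i * x j) \<ge> (\<Sum>i<2*n. (x i)^2)" by simp
  qed
qed

lemma mult_mat_sum: "A \<in> carrier_mat m k \<Longrightarrow> B \<in> carrier_mat k p \<Longrightarrow> i < m \<Longrightarrow> j < p \<Longrightarrow>
   (A * B) $$ (i,j) = (\<Sum>l<k. A $$ (i,l) * B $$ (l,j))"
  by (auto simp: scalar_prod_def atLeast0LessThan intro!: sum.cong)

lemma entry_formula:
  fixes S :: "real mat" and w :: "nat \<Rightarrow> real"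
  assumes S: "S \<in> carrier_mat m m" and i: "i < m" and j: "j < m"
  shows "(S * mat m m (\<lambda>(k,l). (if k = l then 1 else 0) + w k * w l) * transpose_mat S) $$ (i,j)
     = (\<Sum>l<m. S$$(i,l) * S$$(j,l)) + (\<Sum>k<m. S$$(i,k) * w k) * (\<Sum>k<m. S$$(j,k) * w k)"
proof -
  let ?G = "mat m m (\<lambda>(k,l). (if k = l then 1 else 0) + w k * w l) :: real mat"
  have G: "?G \<in> carrier_mat m m" by simp
  have SG: "S * ?G \<in> carrier_mat m m" using S G by simp
  have e1: "(S * ?G) $$ (i,l) = S$$(i,l) + (\<Sum>k<m. S$$(i,k) * w k) * w l" if "l < m" for l
  proof -
    have "(S * ?G) $$ (i,l) = (\<Sum>k<m. S$$(i,k) * ?G $$ (k,l))" by (rule mult_mat_sum[OF S G i that])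
    also have "\<dots> = (\<Sum>k<m. (if k = l then S$$(i,k) else 0) + (S$$(i,k) * w k) * w l)"
      using that by (intro sum.cong refl) (auto simp: algebra_simps)
    also have "\<dots> = S$$(i,l) + (\<Sum>k<m. S$$(i,k) * w k) * w l"
      using that by (simp add: sum.distrib sum_distrib_right)
    finally show ?thesis .
  qed
  have "(S * ?G * transpose_mat S) $$ (i,j) = (\<Sum>l<m. (S * ?G) $$ (i,l) * transpose_mat S $$ (l,j))"
    by (rule mult_mat_sum[OF SG _ i j]) (use S in simp)
  also have "\<dots> = (\<Sum>l<m. (S$$(i,l) + (\<Sum>k<m. S$$(i,k) * w k) * w l) * S$$(j,l))"
    using S j by (intro sum.cong refl) (simp add: e1)
  also have "\<dots> = (\<Sum>l<m. S$$(i,l) * S$$(j,l)) + (\<Sum>k<m. S$$(i,k) * w k) * (\<Sum>k<m. S$$(j,k) * w k)"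
    by (simp add: algebra_simps sum.distrib sum_distrib_left)
  finally show ?thesis .
qed

lemma union_sub:
  fixes F :: "(nat \<Rightarrow> real) \<Rightarrow> nat \<Rightarrow> real"
  assumes add: "\<And>a b i. F (\<lambda>k. a k + b k) i = F a i + F b i"
    and H: "\<And>v. (\<forall>i\<in>I. F v i = 0) \<or> (\<forall>j\<in>J. F v j = 0)"
  shows "(\<forall>v. \<forall>i\<in>I. F v i = 0) \<or> (\<forall>v. \<forall>j\<in>J. F v j = 0)"
proof (rule ccontr)
  assume "\<not> ?thesis"
  then obtain v1 i1 v2 j2 where a: "i1 \<in> I" "F v1 i1 \<noteq> 0" and b: "j2 \<in> J" "F v2 j2 \<noteq> 0" by auto
  have v1: "\<forall>j\<in>J. F v1 j = 0" using H[of v1] a by auto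
  have v2: "\<forall>i\<in>I. F v2 i = 0" using H[of v2] b by auto
  from H[of "\<lambda>k. v1 k + v2 k"] show False
  proof
    assume "\<forall>i\<in>I. F (\<lambda>k. v1 k + v2 k) i = 0"
    then show False using a v2 add[of v1 v2 i1] by auto
  next
    assume "\<forall>j\<in>J. F (\<lambda>k. v1 k + v2 k) j = 0"
    then show False using b v1 add[of v1 v2 j2] by auto
  qed
qed

lemma half:
  fixes S :: "real mat"
  assumes S: "S \<in> carrier_mat (4*n) (4*n)"
    and H: "\<And>v i j. i < 2*n \<Longrightarrow> 2*n \<le> j \<Longrightarrow> j < 4*n \<Longrightarrow>
       (S * mat (4*n) (4*n) (\<lambda>(k,l). (if k = l then 1 else 0) + (if P k then v k else 0) * (if P l then v l else 0))
          * transpose_mat S) $$ (i,j) = 0"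
  shows "(\<forall>i<2*n. \<forall>k<4*n. P k \<longrightarrow> S$$(i,k) = 0) \<or> (\<forall>j. 2*n \<le> j \<and> j < 4*n \<longrightarrow> (\<forall>k<4*n. P k \<longrightarrow> S$$(j,k) = 0))"
proof -
  define F where "F v i = (\<Sum>k<4*n. S$$(i,k) * (if P k then v k else 0))" for v i
  have add: "F (\<lambda>k. a k + b k) i = F a i + F b i" for a b i
    unfolding F_def sum.distrib[symmetric] by (intro sum.cong refl) (simp add: algebra_simps)
  have prod0: "F v i * F v j = 0" if "i < 2*n" "2*n \<le> j" "j < 4*n" for v i j
  proof -
    have ij: "i < 4*n" "j < 4*n" using that by auto
    have "0 = (S * mat (4*n) (4*n) (\<lambda>(k,l). (if k = l then 1 else 0) + (if P k then (\<lambda>_. 0) k else 0) * (if P l then (\<lambda>_. 0) l else 0))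
          * transpose_mat S) $$ (i,j)" using H[OF that, of "\<lambda>_. 0"] by simp
    also have "\<dots> = (\<Sum>l<4*n. S$$(i,l) * S$$(j,l))"
      using entry_formula[OF S ij, of "\<lambda>k. if P k then 0 else 0"] by simp
    finally have z: "(\<Sum>l<4*n. S$$(i,l) * S$$(j,l)) = 0" by simp
    have "0 = (S * mat (4*n) (4*n) (\<lambda>(k,l). (if k = l then 1 else 0) + (if P k then v k else 0) * (if P l then v l else 0))
          * transpose_mat S) $$ (i,j)" using H[OF that, of v] by simp
    also have "\<dots> = F v i * F v j"
      using entry_formula[OF S ij, of "\<lambda>k. if P k then v k else 0"] z unfolding F_def by simp
    finally show ?thesis by simp
  qed
  have H2: "(\<forall>i\<in>{..<2*n}. F v i = 0) \<or> (\<forall>j\<in>{2*n..<4*n}. F v j = 0)" for v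
    using prod0 by fastforce
  have U: "(\<forall>v. \<forall>i\<in>{..<2*n}. F v i = 0) \<or> (\<forall>v. \<forall>j\<in>{2*n..<4*n}. F v j = 0)"
    by (rule union_sub[OF add H2])
  have Fe: "F (\<lambda>k'. if k' = k then 1 else 0) i = S$$(i,k)" if "k < 4*n" "P k" for i k
  proof -
    have "F (\<lambda>k'. if k' = k then 1 else 0) i = (\<Sum>k'<4*n. if k' = k then S$$(i,k) else 0)"
      unfolding F_def using that by (intro sum.cong refl) auto
    also have "\<dots> = S$$(i,k)" using that by simp
    finally show ?thesis .
  qed
  from U show ?thesis
  proof
    assume "\<forall>v. \<forall>i\<in>{..<2*n}. F v i = 0"
    then show ?thesis using Fe by (metis lessThan_iff)
  next
    assume "\<forall>v. \<forall>j\<in>{2*n..<4*n}. F v j = 0"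
    then show ?thesis using Fe by (metis atLeastLessThan_iff)
  qed
qed



lemma row_nonzero:
  assumes sy: "symplectic m S" and i: "i < 2*m" "even i" and z: "\<And>k. k < 2*m \<Longrightarrow> S$$(i,k) = 0"
  shows False
proof -
  have S: "S \<in> carrier_mat (2*m) (2*m)" using sy by (simp add: symplectic_def)
  have sc: "symp_form m \<in> carrier_mat (2*m) (2*m)" by (simp add: symp_form_def)
  have i1: "i + 1 < 2*m" using i by (metis Suc_eq_plus1 Suc_lessI dvd_triv_left even_Suc)
  have Ss: "S * symp_form m \<in> carrier_mat (2*m) (2*m)" using S sc by simp
  have r0: "(S * symp_form m) $$ (i,l) = 0" if "l < 2*m" for l
    using mult_mat_sum[OF S sc i(1) that] z by simp
  have "(S * symp_form m * transpose_mat S) $$ (i, i+1) = (\<Sum>l<2*m. (S * symp_form m) $$ (i,l) * transpose_mat S $$ (l, i+1))"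
    by (rule mult_mat_sum[OF Ss _ i(1) i1]) (use S in simp)
  also have "\<dots> = 0" using r0 by simp
  finally have "symp_form m $$ (i, i+1) = 0" using sy by (simp add: symplectic_def)
  then show False using i i1 by (simp add: symp_form_def)
qed

lemma sigma2: "symp_form (2*n) = four_block_mat (symp_form n) (0\<^sub>m (2*n) (2*n)) (0\<^sub>m (2*n) (2*n)) (symp_form n)"
proof (rule eq_matI)
  fix i j assume ij: "i < dim_row (four_block_mat (symp_form n) (0\<^sub>m (2*n) (2*n)) (0\<^sub>m (2*n) (2*n)) (symp_form n))"
     "j < dim_col (four_block_mat (symp_form n) (0\<^sub>m (2*n) (2*n)) (0\<^sub>m (2*n) (2*n)) (symp_form n))"
  then have ij': "i < 4*n" "j < 4*n" by (auto simp: symp_form_def)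
  show "symp_form (2*n) $$ (i,j) = four_block_mat (symp_form n) (0\<^sub>m (2*n) (2*n)) (0\<^sub>m (2*n) (2*n)) (symp_form n) $$ (i,j)"
  proof (cases "i < 2*n")
    case True
    then show ?thesis using ij' by (auto simp: symp_form_def)
  next
    case False
    then obtain a where a: "i = 2*n + a" by (metis le_add_diff_inverse not_less)
    show ?thesis
    proof (cases "j < 2*n")
      case True
      have "\<not> (odd i \<and> i = j + 1)"
      proof
        assume h: "odd i \<and> i = j + 1"
        then have "a = 0" using a True by linarith
        then show False using h a by simp
      qed
      then show ?thesis using ij' False True a by (auto simp: symp_form_def)
    next
      case False2: False
      then obtain b where b: "j = 2*n + b" by (metis le_add_diff_inverse not_less)
      show ?thesis using ij' False False2 a b by (auto simp: symp_form_def)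
    qed
  qed
qed (auto simp: symp_form_def)

lemma fb_eq:
  assumes "A1 \<in> carrier_mat r1 c1" "D1 \<in> carrier_mat r2 c2" "A2 \<in> carrier_mat r1 c1" "D2 \<in> carrier_mat r2 c2"
    "B1 \<in> carrier_mat r1 c2" "B2 \<in> carrier_mat r1 c2" "C1 \<in> carrier_mat r2 c1" "C2 \<in> carrier_mat r2 c1"
    and e: "four_block_mat A1 B1 C1 D1 = four_block_mat A2 B2 C2 D2"
  shows "A1 = A2 \<and> D1 = D2"
proof
  show "A1 = A2"
  proof (rule eq_matI)
    fix i j assume "i < dim_row A2" "j < dim_col A2"
    then show "A1 $$ (i,j) = A2 $$ (i,j)"
      using arg_cong[OF e, of "\<lambda>M. M $$ (i,j)"] assms(1-8) by (auto simp: carrier_matD)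
  qed (use assms in auto)
  show "D1 = D2"
  proof (rule eq_matI)
    fix i j assume "i < dim_row D2" "j < dim_col D2"
    then show "D1 $$ (i,j) = D2 $$ (i,j)"
      using arg_cong[OF e, of "\<lambda>M. M $$ (i+r1,j+c1)"] assms(1-8) by (auto simp: carrier_matD)
  qed (use assms in auto)
qed



lemma bd_prod:
  fixes X1 :: "real mat"
  assumes "X1 \<in> carrier_mat k k" "Y1 \<in> carrier_mat k k" "X2 \<in> carrier_mat k k" "Y2 \<in> carrier_mat k k"
  shows "four_block_mat X1 (0\<^sub>m k k) (0\<^sub>m k k) Y1 * four_block_mat X2 (0\<^sub>m k k) (0\<^sub>m k k) Y2
     = four_block_mat (X1 * X2) (0\<^sub>m k k) (0\<^sub>m k k) (Y1 * Y2)"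
proof -
  have z: "0\<^sub>m k k \<in> carrier_mat k k" by simp
  show ?thesis using assms by (simp add: mult_four_block_mat[OF assms(1) z z assms(2) assms(3) z z assms(4)])
qed

lemma ad_prod:
  fixes X1 :: "real mat"
  assumes "X1 \<in> carrier_mat k k" "Y1 \<in> carrier_mat k k" "X2 \<in> carrier_mat k k" "Y2 \<in> carrier_mat k k"
  shows "four_block_mat (0\<^sub>m k k) X1 Y1 (0\<^sub>m k k) * four_block_mat X2 (0\<^sub>m k k) (0\<^sub>m k k) Y2
     = four_block_mat (0\<^sub>m k k) (X1 * Y2) (Y1 * X2) (0\<^sub>m k k)"
proof -
  have z: "0\<^sub>m k k \<in> carrier_mat k k" by simp
  show ?thesis using assms by (simp add: mult_four_block_mat[OF z assms(1) assms(2) z assms(3) z z assms(4)])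
qed

lemma ad_prod2:
  fixes X1 :: "real mat"
  assumes "X1 \<in> carrier_mat k k" "Y1 \<in> carrier_mat k k" "X2 \<in> carrier_mat k k" "Y2 \<in> carrier_mat k k"
  shows "four_block_mat (0\<^sub>m k k) X1 Y1 (0\<^sub>m k k) * four_block_mat (0\<^sub>m k k) X2 Y2 (0\<^sub>m k k)
     = four_block_mat (X1 * Y2) (0\<^sub>m k k) (0\<^sub>m k k) (Y1 * X2)"
proof -
  have z: "0\<^sub>m k k \<in> carrier_mat k k" by simp
  show ?thesis using assms by (simp add: mult_four_block_mat[OF z assms(1) assms(2) z z assms(3) assms(4) z])
qed

theorem lemma1:
  fixes n :: nat and S :: "real mat"
  assumes "n \<ge> 1"
    and "symplectic (2*n) S"
    and "\<forall>G1 G2. covariance_matrix n G1 \<and> covariance_matrix n G2 \<longrightarrow>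
           (let M = S * four_block_mat G1 (0\<^sub>m (2*n) (2*n)) (0\<^sub>m (2*n) (2*n)) G2 * transpose_mat S
            in \<forall>i j. (i < 2*n \<and> 2*n \<le> j \<and> j < 4*n \<longrightarrow> M $$ (i,j) = 0) \<and>
                     (2*n \<le> i \<and> i < 4*n \<and> j < 2*n \<longrightarrow> M $$ (i,j) = 0))"
  shows "(\<exists>A D. symplectic n A \<and> symplectic n D \<and>
            S = four_block_mat A (0\<^sub>m (2*n) (2*n)) (0\<^sub>m (2*n) (2*n)) D)
       \<or> (\<exists>B C. symplectic n B \<and> symplectic n C \<and>
            S = four_block_mat (0\<^sub>m (2*n) (2*n)) B C (0\<^sub>m (2*n) (2*n)))"
proof -
  have S: "S \<in> carrier_mat (4*n) (4*n)" using assms(2) by (simp add: symplectic_def mult.assoc)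
  have H: "(S * four_block_mat G1 (0\<^sub>m (2*n) (2*n)) (0\<^sub>m (2*n) (2*n)) G2 * transpose_mat S) $$ (i,j) = 0"
    if "covariance_matrix n G1" "covariance_matrix n G2" "i < 2*n" "2*n \<le> j" "j < 4*n" for G1 G2 i j
    using assms(3) that unfolding Let_def by blast
  have fb1: "four_block_mat (Gv n v) (0\<^sub>m (2*n) (2*n)) (0\<^sub>m (2*n) (2*n)) (Gv n (\<lambda>_. 0))
     = mat (4*n) (4*n) (\<lambda>(k,l). (if k = l then 1 else 0) + (if k < 2*n then v k else 0) * (if l < 2*n then v l else 0))" for v
    by (rule eq_matI) (auto simp: Gv_def)
  have fb2: "four_block_mat (Gv n (\<lambda>_. 0)) (0\<^sub>m (2*n) (2*n)) (0\<^sub>m (2*n) (2*n)) (Gv n (\<lambda>k. v (k + 2*n)))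
     = mat (4*n) (4*n) (\<lambda>(k,l). (if k = l then 1 else 0) + (if 2*n \<le> k then v k else 0) * (if 2*n \<le> l then v l else 0))" for v
    by (rule eq_matI) (auto simp: Gv_def)
  have ra: "(\<forall>i<2*n. \<forall>k<4*n. k < 2*n \<longrightarrow> S$$(i,k) = 0) \<or> (\<forall>j. 2*n \<le> j \<and> j < 4*n \<longrightarrow> (\<forall>k<4*n. k < 2*n \<longrightarrow> S$$(j,k) = 0))"
  proof (rule half[OF S])
    fix v i j assume "i < 2*n" "2*n \<le> j" "j < 4*n"
    from H[OF Gv_cm[of n v] Gv_cm[of n "\<lambda>_. 0"] this] show "(S * mat (4*n) (4*n) (\<lambda>(k,l). (if k = l then 1 else 0) + (if k < 2*n then v k else 0) * (if l < 2*n then v l else 0))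
          * transpose_mat S) $$ (i,j) = 0" unfolding fb1 .
  qed
  have rb: "(\<forall>i<2*n. \<forall>k<4*n. 2*n \<le> k \<longrightarrow> S$$(i,k) = 0) \<or> (\<forall>j. 2*n \<le> j \<and> j < 4*n \<longrightarrow> (\<forall>k<4*n. 2*n \<le> k \<longrightarrow> S$$(j,k) = 0))"
  proof (rule half[OF S])
    fix v i j assume "i < 2*n" "2*n \<le> j" "j < 4*n"
    from H[OF Gv_cm[of n "\<lambda>_. 0"] Gv_cm[of n "\<lambda>k. v (k + 2*n)"] this] show "(S * mat (4*n) (4*n) (\<lambda>(k,l). (if k = l then 1 else 0) + (if 2*n \<le> k then v k else 0) * (if 2*n \<le> l then v l else 0))
          * transpose_mat S) $$ (i,j) = 0" unfolding fb2 .
  qed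
  have r0: False if "\<forall>k<4*n. S$$(0,k) = 0"
    by (rule row_nonzero[OF assms(2), of 0]) (use that assms(1) in auto)
  have r2: False if "\<forall>k<4*n. S$$(2*n,k) = 0"
    by (rule row_nonzero[OF assms(2), of "2*n"]) (use that assms(1) in auto)
  define A where "A = mat (2*n) (2*n) (\<lambda>(i,j). S$$(i,j))"
  define B where "B = mat (2*n) (2*n) (\<lambda>(i,j). S$$(i,j+2*n))"
  define C where "C = mat (2*n) (2*n) (\<lambda>(i,j). S$$(i+2*n,j))"
  define D where "D = mat (2*n) (2*n) (\<lambda>(i,j). S$$(i+2*n,j+2*n))"
  have cA: "A \<in> carrier_mat (2*n) (2*n)" and cB: "B \<in> carrier_mat (2*n) (2*n)"
    and cC: "C \<in> carrier_mat (2*n) (2*n)" and cD: "D \<in> carrier_mat (2*n) (2*n)"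
    by (auto simp: A_def B_def C_def D_def)
  have sc: "symp_form n \<in> carrier_mat (2*n) (2*n)" by (simp add: symp_form_def)
  have z: "0\<^sub>m (2*n) (2*n) \<in> carrier_mat (2*n) (2*n)" by simp
  have Sfb: "S = four_block_mat A B C D"
    by (rule eq_matI) (use S in \<open>auto simp: A_def B_def C_def D_def\<close>)
  have symp: "S * symp_form (2*n) * transpose_mat S = symp_form (2*n)"
    using assms(2) by (simp add: symplectic_def)
  from ra show ?thesis
  proof
    assume TL: "\<forall>i<2*n. \<forall>k<4*n. k < 2*n \<longrightarrow> S$$(i,k) = 0"
    from rb show ?thesis
    proof
      assume TR: "\<forall>i<2*n. \<forall>k<4*n. 2*n \<le> k \<longrightarrow> S$$(i,k) = 0"
      have "\<forall>k<4*n. S$$(0,k) = 0" 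
      proof (intro allI impI)
        fix k assume "k < 4*n"
        moreover have "0 < 2*n" using assms(1) by simp
        ultimately show "S$$(0,k) = 0" using TL TR by (cases "k < 2*n") auto
      qed
      then show ?thesis using r0 by blast
    next
      assume BR: "\<forall>j. 2*n \<le> j \<and> j < 4*n \<longrightarrow> (\<forall>k<4*n. 2*n \<le> k \<longrightarrow> S$$(j,k) = 0)"
      have A0: "A = 0\<^sub>m (2*n) (2*n)" by (rule eq_matI) (use TL in \<open>auto simp: A_def\<close>)
      have D0: "D = 0\<^sub>m (2*n) (2*n)" by (rule eq_matI) (use BR in \<open>auto simp: D_def\<close>)
      have Sfb': "S = four_block_mat (0\<^sub>m (2*n) (2*n)) B C (0\<^sub>m (2*n) (2*n))" using Sfb A0 D0 by simp
      have tS: "transpose_mat S = four_block_mat (0\<^sub>m (2*n) (2*n)) (transpose_mat C) (transpose_mat B) (0\<^sub>m (2*n) (2*n))"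
        unfolding Sfb' by (subst transpose_four_block_mat[OF z cB cC z]) simp
      have P: "S * symp_form (2*n) * transpose_mat S =
        four_block_mat (B * symp_form n * transpose_mat B) (0\<^sub>m (2*n) (2*n)) (0\<^sub>m (2*n) (2*n)) (C * symp_form n * transpose_mat C)"
        unfolding tS sigma2 unfolding Sfb'
        by (simp add: ad_prod[OF cB cC sc sc] ad_prod2[OF mult_carrier_mat[OF cB sc] mult_carrier_mat[OF cC sc] transpose_carrier_mat[THEN iffD2, OF cC] transpose_carrier_mat[THEN iffD2, OF cB]] cB cC sc)
      have "B * symp_form n * transpose_mat B = symp_form n \<and> C * symp_form n * transpose_mat C = symp_form n"
        using trans[OF P[symmetric] symp, unfolded sigma2]
        by (intro fb_eq) (use cB cC sc z in auto)
      then show ?thesis using Sfb' cB cC unfolding symplectic_def by blast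
    qed
  next
    assume BL: "\<forall>j. 2*n \<le> j \<and> j < 4*n \<longrightarrow> (\<forall>k<4*n. k < 2*n \<longrightarrow> S$$(j,k) = 0)"
    from rb show ?thesis
    proof
      assume TR: "\<forall>i<2*n. \<forall>k<4*n. 2*n \<le> k \<longrightarrow> S$$(i,k) = 0"
      have B0: "B = 0\<^sub>m (2*n) (2*n)" by (rule eq_matI) (use TR in \<open>auto simp: B_def\<close>)
      have C0: "C = 0\<^sub>m (2*n) (2*n)" by (rule eq_matI) (use BL in \<open>auto simp: C_def\<close>)
      have Sfb': "S = four_block_mat A (0\<^sub>m (2*n) (2*n)) (0\<^sub>m (2*n) (2*n)) D" using Sfb B0 C0 by simp
      have tS: "transpose_mat S = four_block_mat (transpose_mat A) (0\<^sub>m (2*n) (2*n)) (0\<^sub>m (2*n) (2*n)) (transpose_mat D)"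
        unfolding Sfb' by (subst transpose_four_block_mat[OF cA z z cD]) simp
      have P: "S * symp_form (2*n) * transpose_mat S =
        four_block_mat (A * symp_form n * transpose_mat A) (0\<^sub>m (2*n) (2*n)) (0\<^sub>m (2*n) (2*n)) (D * symp_form n * transpose_mat D)"
        unfolding tS sigma2 unfolding Sfb'
        by (simp add: bd_prod[OF cA cD sc sc] bd_prod[OF mult_carrier_mat[OF cA sc] mult_carrier_mat[OF cD sc] transpose_carrier_mat[THEN iffD2, OF cA] transpose_carrier_mat[THEN iffD2, OF cD]] cA cD sc)
      have "A * symp_form n * transpose_mat A = symp_form n \<and> D * symp_form n * transpose_mat D = symp_form n"
        using trans[OF P[symmetric] symp, unfolded sigma2]
        by (intro fb_eq) (use cA cD sc z in auto)
      then show ?thesis using Sfb' cA cD unfolding symplectic_def by blast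
    next
      assume BR: "\<forall>j. 2*n \<le> j \<and> j < 4*n \<longrightarrow> (\<forall>k<4*n. 2*n \<le> k \<longrightarrow> S$$(j,k) = 0)"
      have "\<forall>k<4*n. S$$(2*n,k) = 0" 
      proof (intro allI impI)
        fix k assume "k < 4*n"
        moreover have "2*n < 4*n" using assms(1) by simp
        ultimately show "S$$(2*n,k) = 0" using BL BR by (cases "k < 2*n") auto
      qed
      then show ?thesis using r2 by blast
    qed
  qed
qed

end
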